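(* Let $w$, $w_{-\frac12}$, the nodes $(x_j,\pm y_j)$, $f_e$, $f_o$ and $\mathcal L_nf(x,y)=L_n(w_{-\frac12};f_e,x)+y\,L_n(w_{-\frac12};f_o,x)$ be as in the context, and equip the unit circle $\Omega$ with the normalized norm $$\|g\|^2_{L^2(\varpi,\Omega)}=c_w\int_{-\pi}^{\pi}|g(\cos\theta,\sin\theta)|^2w(\cos\theta)\,d\theta,\qquad c_w=\Big(\int_{-\pi}^{\pi}w(\cos\theta)\,d\theta\Big)^{-1}.$$ Then for every function $f$ on the unit circle, $$\|\mathcal L_nf\|_{L^2(\varpi,\Omega)}\le\max_{1\le j\le n}|f_e(x_j)|+\max_{1\le j\le n}|f_o(x_j)| .$$ Moreover, if $f_e$ and $f_o$ extend to continuous functions on $[-1,1]$, then $$\|\mathcal L_nf-f\|_{L^2(\varpi,\Omega)}\le 2E_{n-1}(f_e)_\infty+2E_{n-1}(f_o)_\infty,$$ and in particular $\|\mathcal L_nf-f\|_{L^2(\varpi,\Omega)}\to0$ as $n\to\infty$.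
   Context: $w$ is an even nonnegative weight on $[-1,1]$ with infinite support, $w_{-\frac12}(t)=(1-t^2)^{-\frac12}w(t)$; $x_1,\dots,x_n$ are the zeros of the orthogonal polynomial $p_n(w_{-\frac12};\cdot)$ of degree $n$, $y_j=\sqrt{1-x_j^2}$. $f_e(x)=\frac{f(x,\sqrt{1-x^2})+f(x,-\sqrt{1-x^2})}{2}$, $f_o(x)=\frac{f(x,\sqrt{1-x^2})-f(x,-\sqrt{1-x^2})}{2\sqrt{1-x^2}}$. $L_n(v;g,\cdot)$ denotes the Lagrange interpolation polynomial of degree at most $n-1$ of $g$ at the zeros of $p_n(v;\cdot)$. For continuous $g$ on $[-1,1]$, $E_m(g)_\infty=\inf_{p\in\Pi_m}\|g-p\|_{\infty}$, where $\Pi_m$ is the space of polynomials of degree at most $m$ in one variable. *)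

theory Defs
  imports "HOL-Analysis.Analysis" "HOL-Computational_Algebra.Polynomial"
begin

definition wmh :: "(real \<Rightarrow> real) \<Rightarrow> real \<Rightarrow> real" where
  "wmh w t = w t / sqrt (1 - t\<^sup>2)"

definition orth_poly :: "(real \<Rightarrow> real) \<Rightarrow> nat \<Rightarrow> real poly \<Rightarrow> bool" where
  "orth_poly v n p \<longleftrightarrow> degree p = n \<and>
     (\<forall>q :: real poly. degree q < n \<longrightarrow>
        integral {-1..1} (\<lambda>t. poly p t * poly q t * v t) = 0)"

definition lagrange_interp :: "real set \<Rightarrow> (real \<Rightarrow> real) \<Rightarrow> real \<Rightarrow> real" where
  "lagrange_interp X g t = (\<Sum>xj\<in>X. g xj * (\<Prod>xk\<in>X - {xj}. (t - xk) / (xj - xk)))"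

definition L_interp :: "real poly \<Rightarrow> (real \<Rightarrow> real) \<Rightarrow> real \<Rightarrow> real" where
  "L_interp p g = lagrange_interp {x. poly p x = 0} g"

definition f_even :: "(real \<Rightarrow> real \<Rightarrow> real) \<Rightarrow> real \<Rightarrow> real" where
  "f_even f x = (f x (sqrt (1 - x\<^sup>2)) + f x (- sqrt (1 - x\<^sup>2))) / 2"

definition f_odd :: "(real \<Rightarrow> real \<Rightarrow> real) \<Rightarrow> real \<Rightarrow> real" where
  "f_odd f x = (f x (sqrt (1 - x\<^sup>2)) - f x (- sqrt (1 - x\<^sup>2))) / (2 * sqrt (1 - x\<^sup>2))"

definition circ_interp :: "real poly \<Rightarrow> (real \<Rightarrow> real \<Rightarrow> real) \<Rightarrow> real \<Rightarrow> real \<Rightarrow> real" where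
  "circ_interp p f x y = L_interp p (f_even f) x + y * L_interp p (f_odd f) x"

definition c_w :: "(real \<Rightarrow> real) \<Rightarrow> real" where
  "c_w w = 1 / integral {-pi..pi} (\<lambda>\<theta>. w (cos \<theta>))"

definition circ_norm :: "(real \<Rightarrow> real) \<Rightarrow> (real \<Rightarrow> real \<Rightarrow> real) \<Rightarrow> real" where
  "circ_norm w g = sqrt (c_w w * integral {-pi..pi} (\<lambda>\<theta>. (g (cos \<theta>) (sin \<theta>))\<^sup>2 * w (cos \<theta>)))"

definition best_approx :: "nat \<Rightarrow> (real \<Rightarrow> real) \<Rightarrow> real" where
  "best_approx m g = (INF p\<in>{p :: real poly. degree p \<le> m}. (SUP t\<in>{-1..1}. \<bar>g t - poly p t\<bar>))"

end

theory Submission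
  imports Defs
begin

definition ellp :: "real set \<Rightarrow> real \<Rightarrow> real poly" where
  "ellp X j = (\<Prod>k\<in>X-{j}. [:-k/(j-k), 1/(j-k):])"

definition lagp :: "real set \<Rightarrow> (real \<Rightarrow> real) \<Rightarrow> real poly" where
  "lagp X g = (\<Sum>j\<in>X. smult (g j) (ellp X j))"

lemma poly_ellp: "poly (ellp X j) t = (\<Prod>k\<in>X-{j}. (t - k)/(j - k))"
  unfolding ellp_def poly_prod
proof (rule prod.cong)
  fix k assume "k \<in> X - {j}"
  then have "j - k \<noteq> 0" by auto
  then show "poly [:- k / (j - k), 1 / (j - k):] t = (t - k) / (j - k)"
    by (simp add: diff_divide_distrib)
qed simp

lemma lag_poly: "lagrange_interp X g t = poly (lagp X g) t"
  unfolding lagrange_interp_def lagp_def by (simp add: poly_sum poly_ellp)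

lemma deg_ellp: assumes "finite X" "j \<in> X" shows "degree (ellp X j) \<le> card X - 1"
proof -
  have "degree (ellp X j) \<le> sum (degree \<circ> (\<lambda>k. [:-k/(j-k), 1/(j-k):])) (X-{j})"
    unfolding ellp_def by (rule degree_prod_sum_le) (use assms in auto)
  also have "\<dots> \<le> (\<Sum>k\<in>X-{j}. 1)" by (rule sum_mono) simp
  also have "\<dots> = card X - 1" using assms by simp
  finally show ?thesis .
qed

lemma deg_lagp: assumes "finite X" shows "degree (lagp X g) \<le> card X - 1"
  unfolding lagp_def
  by (rule degree_sum_le[OF assms]) (use deg_ellp[OF assms] degree_smult_le order_trans in blast)

lemma ellp_node: assumes "finite X" "j \<in> X" "k \<in> X"
  shows "poly (ellp X j) k = (if k = j then 1 else 0)"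
proof (cases "k = j")
  case True
  then show ?thesis unfolding poly_ellp by (auto intro!: prod.neutral)
next
  case False
  then show ?thesis unfolding poly_ellp using assms
    by (auto intro!: prod_zero bexI[of _ k])
qed

lemma lagp_node: assumes "finite X" "k \<in> X" shows "poly (lagp X g) k = g k"
proof -
  have "poly (lagp X g) k = (\<Sum>j\<in>X. if j = k then g j else 0)"
    unfolding lagp_def poly_sum using assms by (intro sum.cong) (auto simp: ellp_node)
  also have "\<dots> = g k" using assms by simp
  finally show ?thesis .
qed

lemma lagp_exact: assumes "finite X" "degree p < card X" shows "lagp X (poly p) = p"
proof (rule poly_eqI_degree[of X])
  show "degree (lagp X (poly p)) < card X" using deg_lagp[OF assms(1), of "poly p"] assms(2) by linarith
qed (use assms lagp_node in auto)

lemma lagp_cong: "(\<And>x. x \<in> X \<Longrightarrow> g x = h x) \<Longrightarrow> lagp X g = lagp X h"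
  unfolding lagp_def by (intro sum.cong) auto

lemma lagp_diff: "lagp X (\<lambda>x. g x - h x) = lagp X g - lagp X h"
  unfolding lagp_def by (simp add: smult_diff_left sum_subtractf)


lemma sign_lemma:
  fixes p :: "real poly"
  assumes "p \<noteq> 0"
  shows "\<exists>Z. finite Z \<and> Z \<subseteq> {z. z \<in> {-1<..<1} \<and> poly p z = 0} \<and>
     ((\<forall>x\<in>{-1<..<1}. 0 \<le> poly p x * (\<Prod>z\<in>Z. x - z)) \<or>
      (\<forall>x\<in>{-1<..<1}. poly p x * (\<Prod>z\<in>Z. x - z) \<le> 0))"
  using assms
proof (induction "degree p" arbitrary: p rule: less_induct)
  case less
  show ?case
  proof (cases "\<exists>a\<in>{-1<..<1}. poly p a = 0")
    case False
    have "(\<forall>x\<in>{-1<..<1}. 0 \<le> poly p x) \<or> (\<forall>x\<in>{-1<..<1}. poly p x \<le> 0)"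
    proof (rule ccontr)
      assume "\<not> ?thesis"
      then obtain x y where xy: "x \<in> {-1<..<1}" "y \<in> {-1<..<1}" "poly p x < 0" "poly p y > 0"
        by (auto simp: not_le)
      have "x \<noteq> y" using xy by auto
      then consider "x < y" | "y < x" by linarith
      then show False
      proof cases
        case 1
        from poly_IVT_pos[OF 1 xy(3) xy(4)] obtain z where "x < z" "z < y" "poly p z = 0" by blast
        with xy False show False by auto
      next
        case 2
        from poly_IVT_neg[OF 2 xy(4) xy(3)] obtain z where "y < z" "z < x" "poly p z = 0" by blast
        with xy False show False by auto
      qed
    qed
    then show ?thesis by (intro exI[of _ "{}"]) auto
  next
    case True
    then obtain a where a: "a \<in> {-1<..<1}" "poly p a = 0" by blast
    then obtain p' where p': "p = [:-a,1:] * p'" using poly_eq_0_iff_dvd by (metis dvdE)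
    have p'0: "p' \<noteq> 0" using less.prems p' by auto
    have "degree ([:-a,1:] * p') = degree [:-a,1:] + degree p'"
      by (rule degree_mult_eq) (use p'0 in auto)
    with p' have deg: "degree p = Suc (degree p')" by simp
    from less.hyps[of p'] deg p'0 obtain Z' where Z': "finite Z'"
      "Z' \<subseteq> {z. z \<in> {-1<..<1} \<and> poly p' z = 0}"
      "(\<forall>x\<in>{-1<..<1}. 0 \<le> poly p' x * (\<Prod>z\<in>Z'. x - z)) \<or>
       (\<forall>x\<in>{-1<..<1}. poly p' x * (\<Prod>z\<in>Z'. x - z) \<le> 0)" by auto
    have sub: "{z. z \<in> {-1<..<1} \<and> poly p' z = 0} \<subseteq> {z. z \<in> {-1<..<1} \<and> poly p z = 0}"
      using p' by auto
    show ?thesis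
    proof (cases "a \<in> Z'")
      case True
      have eq: "poly p x * (\<Prod>z\<in>Z'-{a}. x - z) = poly p' x * (\<Prod>z\<in>Z'. x - z)" for x
        using True Z'(1) by (simp add: p' prod.remove[of Z' a] algebra_simps)
      show ?thesis
        by (rule exI[of _ "Z' - {a}"]) (use Z' sub eq in auto)
    next
      case False
      have eq: "poly p x * (\<Prod>z\<in>insert a Z'. x - z) = (x - a)^2 * (poly p' x * (\<Prod>z\<in>Z'. x - z))" for x
        using False Z'(1) by (simp add: p' power2_eq_square algebra_simps)
      have "(\<forall>x\<in>{-1<..<1}. 0 \<le> poly p x * (\<Prod>z\<in>insert a Z'. x - z)) \<or>
       (\<forall>x\<in>{-1<..<1}. poly p x * (\<Prod>z\<in>insert a Z'. x - z) \<le> 0)"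
        unfolding eq using Z'(3)
        by (auto intro: mult_nonneg_nonneg mult_nonneg_nonpos)
      then show ?thesis
        by (intro exI[of _ "insert a Z'"]) (use Z' sub a in auto)
    qed
  qed
qed


locale wctx =
  fixes w :: "real \<Rightarrow> real" and P :: "nat \<Rightarrow> real poly"
  assumes w_nonneg: "\<And>t. t \<in> {-1..1} \<Longrightarrow> w t \<ge> 0"
    and w_even: "\<And>t. w (- t) = w t"
    and w_int: "wmh w integrable_on {-1..1}"
    and w_pos: "integral {-1..1} w > 0"
    and P_orth: "\<And>n. orth_poly (wmh w) n (P n)"
begin

definition I :: "(real \<Rightarrow> real) \<Rightarrow> real" where
  "I H = integral {-1..1} (\<lambda>x. H x * wmh w x)"

lemma wmh_nonneg: "x \<in> {-1..1} \<Longrightarrow> 0 \<le> wmh w x"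
  unfolding wmh_def using w_nonneg by (auto intro!: divide_nonneg_nonneg simp: abs_square_le_1)

lemma wmh_abs: "wmh w absolutely_integrable_on {-1..1}"
  using nonnegative_absolutely_integrable_1[OF w_int] wmh_nonneg by blast

lemma cont_abs:
  assumes "continuous_on {-1..1} H"
  shows "(\<lambda>x. H x * wmh w x) absolutely_integrable_on {-1..1}"
proof (rule absolutely_integrable_bounded_measurable_product_real)
  show "H \<in> borel_measurable (lebesgue_on {-1..1})"
    by (rule continuous_imp_measurable_on_sets_lebesgue[OF assms]) auto
  show "bounded (H ` {-1..1})"
    by (rule compact_imp_bounded[OF compact_continuous_image[OF assms]]) auto
qed (auto simp: wmh_abs)

lemma cont_int:
  assumes "continuous_on {-1..1} H"
  shows "(\<lambda>x. H x * wmh w x) integrable_on {-1..1}"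
  using cont_abs[OF assms] set_lebesgue_integral_eq_integral(1)
  using absolutely_integrable_on_def by blast

lemma poly_int: "(\<lambda>x. poly p x * wmh w x) integrable_on {-1..1}"
  by (rule cont_int) (auto intro: continuous_intros)

lemma I_pos:
  assumes "p \<noteq> 0" "\<And>x. x \<in> {-1<..<1} \<Longrightarrow> 0 \<le> poly p x"
  shows "0 < I (poly p)"
proof -
  have nn: "0 \<le> poly p x * wmh w x" if "x \<in> {-1..1}" for x
  proof (cases "x = -1 \<or> x = 1")
    case True then show ?thesis by (auto simp: wmh_def)
  next
    case False then show ?thesis using that assms(2)[of x] wmh_nonneg[OF that] by auto
  qed
  have ge: "0 \<le> I (poly p)" unfolding I_def
    by (rule integral_nonneg[OF poly_int]) (use nn in auto)
  have False if z: "I (poly p) = 0"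
  proof -
    have af: "(\<lambda>x. poly p x * wmh w x) absolutely_integrable_on {-1..1}"
      by (rule cont_abs) (auto intro: continuous_intros)
    have "integral {-1..1} (\<lambda>x. poly p x * wmh w x) = set_lebesgue_integral lebesgue {-1..1} (\<lambda>x. poly p x * wmh w x)"
      by (intro set_lebesgue_integral_eq_integral(2)[symmetric] af)
    also have "\<dots> = 0 \<longleftrightarrow> (AE x in lebesgue. indicator {-1..1} x *\<^sub>R (poly p x * wmh w x) = 0)"
      unfolding set_lebesgue_integral_def
    proof (rule integral_nonneg_eq_0_iff_AE)
      show "integrable lebesgue (\<lambda>x. indicat_real {-1..1} x *\<^sub>R (poly p x * wmh w x))"
        by (metis af set_integrable_def)
    qed (use nn in \<open>auto simp: indicator_def\<close>)
    finally have "AE x in lebesgue. indicator {-1..1} x *\<^sub>R (poly p x * wmh w x) = 0"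
      using z by (simp add: I_def)
    then obtain N where N: "negligible N"
      "{x. \<not> indicator {-1..1} x *\<^sub>R (poly p x * wmh w x) = (0::real)} \<subseteq> N"
      unfolding eventually_ae_filter_negligible by blast
    define M where "M = N \<union> {x. poly p x = 0} \<union> {-1,1}"
    have negM: "negligible M" unfolding M_def
      using N(1) poly_roots_finite[OF assms(1)] negligible_finite by auto
    have zz: "\<And>x. x \<in> {-1..1} - M \<Longrightarrow> 0 = w x"
    proof -
      fix x assume x: "x \<in> {-1..1} - M"
      then have "x \<notin> N" "poly p x \<noteq> 0" "x \<noteq> -1" "x \<noteq> 1" by (auto simp: M_def)
      with N(2) x have "wmh w x = 0" by (auto simp: indicator_def)
      moreover have "sqrt (1 - x\<^sup>2) > 0" using x \<open>x \<noteq> -1\<close> \<open>x \<noteq> 1\<close>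
        by (auto simp: abs_square_less_1 intro!: real_sqrt_gt_zero)
      ultimately show "0 = w x" by (auto simp: wmh_def)
    qed
    have "integral {-1..1} w = integral {-1..1} (\<lambda>x::real. 0::real)"
      by (rule integral_spike[OF negM zz])
    then show False using w_pos by simp
  qed
  with ge show ?thesis by (force simp: less_le)
qed


lemma degP: "degree (P n) = n"
  using P_orth[of n] by (simp add: orth_poly_def)

lemma orthP: "degree q < n \<Longrightarrow> I (\<lambda>t. poly (P n) t * poly q t) = 0"
  using P_orth[of n] by (simp add: orth_poly_def I_def)

lemma roots:
  assumes n: "n \<ge> 1"
  shows "finite {x. poly (P n) x = 0}" "card {x. poly (P n) x = 0} = n"
    "{x. poly (P n) x = 0} \<subseteq> {-1<..<1}"
proof -
  define p where "p = P n"
  have p0: "p \<noteq> 0" using degP[of n] n p_def by auto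
  define X where "X = {x. poly p x = 0}"
  have finX: "finite X" using poly_roots_finite[OF p0] X_def by simp
  have cardX: "card X \<le> n" using card_poly_roots_bound[OF p0] degP[of n] X_def p_def by simp
  obtain Z where Z: "finite Z" "Z \<subseteq> {z. z \<in> {-1<..<1} \<and> poly p z = 0}"
    "(\<forall>x\<in>{-1<..<1}. 0 \<le> poly p x * (\<Prod>z\<in>Z. x - z)) \<or>
     (\<forall>x\<in>{-1<..<1}. poly p x * (\<Prod>z\<in>Z. x - z) \<le> 0)"
    using sign_lemma[OF p0] by blast
  define q where "q = (\<Prod>z\<in>Z. [:-z,1:])"
  have polyq: "poly q x = (\<Prod>z\<in>Z. x - z)" for x by (simp add: q_def poly_prod)
  have degq: "degree q = card Z"
    unfolding q_def by (subst degree_prod_eq_sum_degree) auto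
  have q0: "q \<noteq> 0" unfolding q_def using Z(1) by (simp add: prod_zero_iff)
  have pq0: "p * q \<noteq> 0" using p0 q0 by simp
  have "card Z \<ge> n"
  proof (rule ccontr)
    assume "\<not> card Z \<ge> n"
    then have "degree q < n" using degq by simp
    then have I0: "I (\<lambda>t. poly p t * poly q t) = 0" using orthP p_def by blast
    from Z(3) show False
    proof
      assume h: "\<forall>x\<in>{-1<..<1}. 0 \<le> poly p x * (\<Prod>z\<in>Z. x - z)"
      have "0 < I (poly (p * q))" by (rule I_pos[OF pq0]) (use h polyq in auto)
      moreover have "poly (p*q) = (\<lambda>t. poly p t * poly q t)" by (rule ext) simp
      ultimately show False using I0 by simp
    next
      assume h: "\<forall>x\<in>{-1<..<1}. poly p x * (\<Prod>z\<in>Z. x - z) \<le> 0"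
      have "0 < I (poly (- (p * q)))" by (rule I_pos) (use h polyq pq0 in auto)
      moreover have "I (poly (- (p * q))) = - I (\<lambda>t. poly p t * poly q t)"
      proof -
        have "poly (- (p * q)) = (\<lambda>t. - (poly p t * poly q t))" by (rule ext) simp
        then show ?thesis unfolding I_def by (simp only: mult_minus_left integral_neg)
      qed
      ultimately show False using I0 by simp
    qed
  qed
  moreover have ZX: "Z \<subseteq> X" using Z(2) X_def by auto
  moreover have "card Z \<le> card X" using card_mono[OF finX ZX] .
  ultimately have "card X = n" "Z = X" using cardX card_subset_eq[OF finX ZX] by auto
  then show "finite {x. poly (P n) x = 0}" "card {x. poly (P n) x = 0} = n"
    "{x. poly (P n) x = 0} \<subseteq> {-1<..<1}" using finX X_def p_def Z(2) by auto
qed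

end


context wctx begin

definition X :: "nat \<Rightarrow> real set" where "X n = {x. poly (P n) x = 0}"
definition lam :: "nat \<Rightarrow> real \<Rightarrow> real" where "lam n j = I (poly (ellp (X n) j))"

lemma I_lin_sum:
  assumes "finite A"
  shows "I (\<lambda>x. \<Sum>a\<in>A. c a * poly (e a) x) = (\<Sum>a\<in>A. c a * I (poly (e a)))"
proof -
  have "I (\<lambda>x. \<Sum>a\<in>A. c a * poly (e a) x) = integral {-1..1} (\<lambda>x. \<Sum>a\<in>A. c a * (poly (e a) x * wmh w x))"
    unfolding I_def by (simp add: sum_distrib_right mult.assoc)
  also have "\<dots> = (\<Sum>a\<in>A. integral {-1..1} (\<lambda>x. c a * (poly (e a) x * wmh w x)))"
    by (rule integral_sum[OF assms]) (use poly_int integrable_on_mult_right in blast)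
  also have "\<dots> = (\<Sum>a\<in>A. c a * I (poly (e a)))" by (simp add: I_def)
  finally show ?thesis .
qed

lemma I_add:
  assumes "continuous_on {-1..1} F" "continuous_on {-1..1} G"
  shows "I (\<lambda>x. F x + G x) = I F + I G"
  unfolding I_def distrib_right by (rule integral_add) (use cont_int assms in auto)

lemma GQ:
  assumes n: "n \<ge> 1" and dh: "degree h < 2 * n"
  shows "I (poly h) = (\<Sum>j\<in>X n. lam n j * poly h j)"
proof -
  define p where "p = P n"
  have p0: "p \<noteq> 0" and dp: "degree p = n" using degP[of n] n p_def by auto
  define q where "q = h div p"
  define r where "r = h mod p"
  have hqr: "h = p * q + r" unfolding q_def r_def by (simp add: mult_div_mod_eq)
  have dr: "degree r < n" using degree_mod_less[OF p0, of h] dp n unfolding r_def by auto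
  have dq: "degree q < n"
  proof (cases "q = 0")
    case False
    have "degree (p * q) = n + degree q" using False p0 dp by (simp add: degree_mult_eq)
    moreover have "p * q = h - r" using hqr by simp
    moreover have "degree (h - r) < 2 * n"
      using degree_diff_le_max[of h r] dh dr by linarith
    ultimately have "n + degree q < 2 * n" by simp
    then show ?thesis by linarith
  qed (use n in simp)
  have finX: "finite (X n)" and cX: "card (X n) = n" using roots[OF n] X_def by auto
  have "I (poly h) = I (\<lambda>x. poly (p * q) x + poly r x)" using hqr by (metis poly_add)
  also have "\<dots> = I (poly (p*q)) + I (poly r)"
    by (rule I_add) (auto intro!: continuous_intros)
  also have "I (poly (p*q)) = 0"
  proof -
    have "poly (p*q) = (\<lambda>t. poly (P n) t * poly q t)" by (rule ext) (simp add: p_def)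
    then show ?thesis using orthP[OF dq] by simp
  qed
  also have "I (poly r) = I (poly (lagp (X n) (poly r)))" using lagp_exact[OF finX] dr cX by simp
  also have "poly (lagp (X n) (poly r)) = (\<lambda>x. \<Sum>j\<in>X n. poly r j * poly (ellp (X n) j) x)"
    unfolding lagp_def by (rule ext) (simp add: poly_sum)
  also have "I \<dots> = (\<Sum>j\<in>X n. poly r j * lam n j)" unfolding lam_def by (rule I_lin_sum[OF finX])
  also have "\<dots> = (\<Sum>j\<in>X n. lam n j * poly h j)"
  proof (rule sum.cong)
    fix j assume "j \<in> X n"
    then have "poly p j = 0" using X_def p_def by simp
    then show "poly r j * lam n j = lam n j * poly h j" using hqr by (simp add: algebra_simps)
  qed simp
  finally show ?thesis by simp
qed

lemma lam_nonneg:
  assumes n: "n \<ge> 1" and j: "j \<in> X n"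
  shows "0 \<le> lam n j"
proof -
  have finX: "finite (X n)" and cX: "card (X n) = n" using roots[OF n] X_def by auto
  define e where "e = ellp (X n) j"
  have "degree (e * e) \<le> degree e + degree e" by (rule degree_mult_le)
  also have "\<dots> \<le> 2 * (n - 1)" using deg_ellp[OF finX j] cX e_def by simp
  finally have "degree (e*e) < 2 * n" using n by linarith
  then have "I (poly (e*e)) = (\<Sum>k\<in>X n. lam n k * poly (e*e) k)" by (rule GQ[OF n])
  also have "\<dots> = (\<Sum>k\<in>X n. if k = j then lam n k else 0)"
    by (rule sum.cong) (auto simp: e_def ellp_node[OF finX j])
  also have "\<dots> = lam n j" using finX j by simp
  finally have eq: "I (poly (e*e)) = lam n j" .
  have "0 \<le> I (poly (e*e))" unfolding I_def
  proof (rule integral_nonneg[OF poly_int])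
    fix x :: real assume "x \<in> {-1..1}"
    moreover have "0 \<le> poly (e*e) x" by simp
    ultimately show "0 \<le> poly (e*e) x * wmh w x" using wmh_nonneg by simp
  qed
  with eq show ?thesis by simp
qed

lemma lam_sum:
  assumes n: "n \<ge> 1"
  shows "(\<Sum>j\<in>X n. lam n j) = I (\<lambda>x. 1)"
proof -
  have "poly 1 = (\<lambda>x::real. 1::real)" by (rule ext) simp
  then show ?thesis using GQ[OF n, of 1] n by simp
qed

lemma I_L2:
  assumes n: "n \<ge> 1"
  shows "I (\<lambda>x. (poly (lagp (X n) g) x)\<^sup>2) \<le> (Max ((\<lambda>x. \<bar>g x\<bar>) ` X n))\<^sup>2 * I (\<lambda>x. 1)"
proof -
  have finX: "finite (X n)" and cX: "card (X n) = n" using roots[OF n] X_def by auto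
  have ne: "X n \<noteq> {}" using cX n by auto
  define L where "L = lagp (X n) g"
  define M where "M = Max ((\<lambda>x. \<bar>g x\<bar>) ` X n)"
  have "degree (L * L) \<le> degree L + degree L" by (rule degree_mult_le)
  also have "\<dots> \<le> 2 * (n - 1)" using deg_lagp[OF finX, of g] cX L_def by simp
  finally have "degree (L*L) < 2 * n" using n by linarith
  then have "I (poly (L*L)) = (\<Sum>k\<in>X n. lam n k * poly (L*L) k)" by (rule GQ[OF n])
  also have "\<dots> = (\<Sum>k\<in>X n. lam n k * (g k)\<^sup>2)"
    by (rule sum.cong) (auto simp: L_def lagp_node[OF finX] power2_eq_square)
  also have "\<dots> \<le> (\<Sum>k\<in>X n. lam n k * M\<^sup>2)"
  proof (rule sum_mono)
    fix k assume k: "k \<in> X n"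
    have "\<bar>g k\<bar> \<le> M" unfolding M_def using finX k by (intro Max_ge) auto
    then have "(g k)\<^sup>2 \<le> M\<^sup>2" by (metis abs_ge_zero abs_le_square_iff abs_of_nonneg order_trans power2_abs)
    then show "lam n k * (g k)\<^sup>2 \<le> lam n k * M\<^sup>2"
      using lam_nonneg[OF n k] by (simp add: mult_left_mono)
  qed
  also have "\<dots> = (\<Sum>k\<in>X n. lam n k) * M\<^sup>2" by (rule sum_distrib_right[symmetric])
  also have "\<dots> = M\<^sup>2 * I (\<lambda>x. 1)" using lam_sum[OF n] by simp
  finally have calc: "I (poly (L*L)) \<le> M\<^sup>2 * I (\<lambda>x. 1)" .
  moreover have "poly (L*L) = (\<lambda>x. (poly L x)\<^sup>2)" by (rule ext) (simp add: power2_eq_square)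
  ultimately show ?thesis
    by (simp add: L_def M_def)
qed

end


context wctx begin

lemma cos_image: "cos ` {0..pi} = {-1..1}"
proof
  show "cos ` {0..pi} \<subseteq> {-1..1}" by auto
  show "{-1..1} \<subseteq> cos ` {0..pi}"
  proof
    fix x :: real assume "x \<in> {-1..1}"
    then have "x = cos (arccos x)" "arccos x \<in> {0..pi}" using arccos_bounded by auto
    then show "x \<in> cos ` {0..pi}" by blast
  qed
qed

lemma SUB:
  assumes H: "continuous_on {-1..1} H"
  shows "((\<lambda>\<theta>. H (cos \<theta>) * w (cos \<theta>)) has_integral 2 * I H) {-pi..pi}"
proof -
  define f where "f = (\<lambda>x. H x * wmh w x)"
  have fa: "f absolutely_integrable_on {-1..1}" unfolding f_def by (rule cont_abs[OF H])
  have inj: "inj_on cos {0..pi}" by (auto intro!: inj_onI cos_inj_pi)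
  have der: "\<And>x. x \<in> {0..pi} \<Longrightarrow> (cos has_field_derivative (- sin x)) (at x within {0..pi})"
    by (auto intro!: derivative_eq_intros)
  have rhs: "f absolutely_integrable_on (cos ` {0..pi}) \<and> integral (cos ` {0..pi}) f = I H"
    unfolding cos_image using fa by (simp add: I_def f_def)
  have "(\<lambda>x. \<bar>- sin x\<bar> * f (cos x)) absolutely_integrable_on {0..pi} \<and>
           integral {0..pi} (\<lambda>x. \<bar>- sin x\<bar> * f (cos x)) = I H"
    by (rule iffD2[OF has_absolute_integral_change_of_variables_1'[of "{0..pi}" cos "\<lambda>x. - sin x" f "I H", OF _ der inj] rhs]) simp
  then have "(\<lambda>x. \<bar>- sin x\<bar> * f (cos x)) integrable_on {0..pi}"
     "integral {0..pi} (\<lambda>x. \<bar>- sin x\<bar> * f (cos x)) = I H"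
    by (auto simp: absolutely_integrable_on_def)
  then have h1: "((\<lambda>x. \<bar>- sin x\<bar> * f (cos x)) has_integral I H) {0..pi}"
    by (metis integrable_integral)
  have h2: "((\<lambda>\<theta>. H (cos \<theta>) * w (cos \<theta>)) has_integral I H) {0..pi}"
  proof (rule has_integral_spike_finite[OF _ _ h1])
    show "finite {0, pi}" by simp
    fix x assume x: "x \<in> {0..pi} - {0, pi}"
    then have sx: "sin x > 0" by (auto intro!: sin_gt_zero)
    have "sqrt (1 - (cos x)\<^sup>2) = sin x"
      using sx by (simp add: sin_squared_eq[symmetric])
    then show "H (cos x) * w (cos x) = \<bar>- sin x\<bar> * f (cos x)"
      using sx by (simp add: f_def wmh_def)
  qed
  then have h3: "((\<lambda>\<theta>. H (cos \<theta>) * w (cos \<theta>)) has_integral I H) {-pi..0}"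
    using Henstock_Kurzweil_Integration.has_integral_reflect_real[where f="\<lambda>\<theta>. H (cos \<theta>) * w (cos \<theta>)" and i="I H" and a=0 and b=pi] by simp
  have "((\<lambda>\<theta>. H (cos \<theta>) * w (cos \<theta>)) has_integral (I H + I H)) {-pi..pi}"
    by (rule has_integral_combine[OF _ _ h3 h2]) auto
  then show ?thesis by (simp only: mult_2)
qed

lemma wcos_abs: "(\<lambda>\<theta>. w (cos \<theta>)) absolutely_integrable_on {-pi..pi}"
proof (rule nonnegative_absolutely_integrable_1)
  show "(\<lambda>\<theta>. w (cos \<theta>)) integrable_on {-pi..pi}"
    using SUB[of "\<lambda>x. 1"] by (auto simp: has_integral_integrable)
qed (auto intro!: w_nonneg)

lemma CI:
  assumes K: "continuous_on {-pi..pi} K"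
  shows "(\<lambda>\<theta>. K \<theta> * w (cos \<theta>)) integrable_on {-pi..pi}"
proof -
  have "(\<lambda>\<theta>. K \<theta> * w (cos \<theta>)) absolutely_integrable_on {-pi..pi}"
  proof (rule absolutely_integrable_bounded_measurable_product_real)
    show "K \<in> borel_measurable (lebesgue_on {-pi..pi})"
      by (rule continuous_imp_measurable_on_sets_lebesgue[OF K]) auto
    show "bounded (K ` {-pi..pi})"
      by (rule compact_imp_bounded[OF compact_continuous_image[OF K]]) auto
  qed (auto simp: wcos_abs)
  then show ?thesis using absolutely_integrable_on_def by blast
qed

lemma ODD:
  fixes k :: "real \<Rightarrow> real"
  assumes "\<And>\<theta>. k (- \<theta>) = - k \<theta>"
  shows "integral {-pi..pi} k = 0"
proof -
  have "integral {-pi..pi} (\<lambda>x. k (-x)) = integral {-pi..pi} k"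
    using Henstock_Kurzweil_Integration.integral_reflect_real[of pi "-pi" k] by simp
  then have "integral {-pi..pi} k = - integral {-pi..pi} k" using assms by simp
  then show ?thesis by simp
qed

lemma I1_pos: "0 < I (\<lambda>x. 1)"
proof -
  have "poly 1 = (\<lambda>x::real. 1::real)" by (rule ext) simp
  moreover have "0 < I (poly 1)" by (rule I_pos) auto
  ultimately show ?thesis by simp
qed

lemma cw_eq: "c_w w = 1 / (2 * I (\<lambda>x. 1))"
  using SUB[of "\<lambda>x. 1"] by (simp add: c_w_def integral_unique)

lemma NORM:
  fixes a b :: "real poly"
  shows "integral {-pi..pi} (\<lambda>\<theta>. (poly a (cos \<theta>) + sin \<theta> * poly b (cos \<theta>))\<^sup>2 * w (cos \<theta>))
     = 2 * I (\<lambda>x. (poly a x)\<^sup>2 + (1 - x\<^sup>2) * (poly b x)\<^sup>2)"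
proof -
  define H where "H = (\<lambda>x. (poly a x)\<^sup>2 + (1 - x\<^sup>2) * (poly b x)\<^sup>2)"
  have eq: "(poly a (cos \<theta>) + sin \<theta> * poly b (cos \<theta>))\<^sup>2 * w (cos \<theta>) =
        H (cos \<theta>) * w (cos \<theta>) + (2 * sin \<theta> * poly a (cos \<theta>) * poly b (cos \<theta>)) * w (cos \<theta>)" for \<theta>
  proof -
    have "(poly a (cos \<theta>) + sin \<theta> * poly b (cos \<theta>))\<^sup>2 * w (cos \<theta>) =
      ((poly a (cos \<theta>))\<^sup>2 + (sin \<theta>)\<^sup>2 * (poly b (cos \<theta>))\<^sup>2) * w (cos \<theta>) + (2 * sin \<theta> * poly a (cos \<theta>) * poly b (cos \<theta>)) * w (cos \<theta>)"
      by (simp add: power2_eq_square algebra_simps)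
    then show ?thesis unfolding H_def by (simp only: sin_squared_eq)
  qed
  have "integral {-pi..pi} (\<lambda>\<theta>. (poly a (cos \<theta>) + sin \<theta> * poly b (cos \<theta>))\<^sup>2 * w (cos \<theta>))
      = integral {-pi..pi} (\<lambda>\<theta>. H (cos \<theta>) * w (cos \<theta>)) +
        integral {-pi..pi} (\<lambda>\<theta>. (2 * sin \<theta> * poly a (cos \<theta>) * poly b (cos \<theta>)) * w (cos \<theta>))"
    unfolding eq
    by (rule integral_add; rule CI) (auto simp: H_def intro!: continuous_intros)
  also have "integral {-pi..pi} (\<lambda>\<theta>. H (cos \<theta>) * w (cos \<theta>)) = 2 * I H"
    by (rule integral_unique[OF SUB]) (auto simp: H_def intro!: continuous_intros)
  also have "integral {-pi..pi} (\<lambda>\<theta>. (2 * sin \<theta> * poly a (cos \<theta>) * poly b (cos \<theta>)) * w (cos \<theta>)) = 0"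
    by (rule ODD) simp
  finally show ?thesis by (simp add: H_def)
qed

lemma NB:
  assumes n: "n \<ge> 1"
  shows "c_w w * integral {-pi..pi} (\<lambda>\<theta>. (poly (lagp (X n) g1) (cos \<theta>) + sin \<theta> * poly (lagp (X n) g2) (cos \<theta>))\<^sup>2 * w (cos \<theta>))
     \<le> (Max ((\<lambda>x. \<bar>g1 x\<bar>) ` X n))\<^sup>2 + (Max ((\<lambda>x. \<bar>g2 x\<bar>) ` X n))\<^sup>2"
proof -
  define A where "A = lagp (X n) g1"
  define B where "B = lagp (X n) g2"
  define M1 where "M1 = Max ((\<lambda>x. \<bar>g1 x\<bar>) ` X n)"
  define M2 where "M2 = Max ((\<lambda>x. \<bar>g2 x\<bar>) ` X n)"
  have i1: "0 < I (\<lambda>x. 1)" by (rule I1_pos)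
  have "I (\<lambda>x. (poly A x)\<^sup>2 + (1 - x\<^sup>2) * (poly B x)\<^sup>2) = I (\<lambda>x. (poly A x)\<^sup>2) + I (\<lambda>x. (1 - x\<^sup>2) * (poly B x)\<^sup>2)"
    by (rule I_add) (auto intro!: continuous_intros)
  also have "I (\<lambda>x. (1 - x\<^sup>2) * (poly B x)\<^sup>2) \<le> I (\<lambda>x. (poly B x)\<^sup>2)"
    unfolding I_def
  proof (rule integral_le)
    show "(\<lambda>x. (1 - x\<^sup>2) * (poly B x)\<^sup>2 * wmh w x) integrable_on {-1..1}"
      by (rule cont_int) (auto intro!: continuous_intros)
    show "(\<lambda>x. (poly B x)\<^sup>2 * wmh w x) integrable_on {-1..1}"
      by (rule cont_int) (auto intro!: continuous_intros)
    fix x :: real assume x: "x \<in> {-1..1}"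
    have "(1 - x\<^sup>2) * (poly B x)\<^sup>2 \<le> (poly B x)\<^sup>2"
      by (simp add: mult_le_cancel_right1 algebra_simps)
    then show "(1 - x\<^sup>2) * (poly B x)\<^sup>2 * wmh w x \<le> (poly B x)\<^sup>2 * wmh w x"
      using wmh_nonneg[OF x] by (simp add: mult_right_mono)
  qed
  finally have "I (\<lambda>x. (poly A x)\<^sup>2 + (1 - x\<^sup>2) * (poly B x)\<^sup>2) \<le> I (\<lambda>x. (poly A x)\<^sup>2) + I (\<lambda>x. (poly B x)\<^sup>2)"
    by simp
  also have "\<dots> \<le> M1\<^sup>2 * I (\<lambda>x. 1) + M2\<^sup>2 * I (\<lambda>x. 1)"
    using I_L2[OF n, of g1] I_L2[OF n, of g2] by (simp add: A_def B_def M1_def M2_def)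
  finally have le: "I (\<lambda>x. (poly A x)\<^sup>2 + (1 - x\<^sup>2) * (poly B x)\<^sup>2) \<le> (M1\<^sup>2 + M2\<^sup>2) * I (\<lambda>x. 1)"
    by (simp add: algebra_simps)
  have "c_w w * integral {-pi..pi} (\<lambda>\<theta>. (poly A (cos \<theta>) + sin \<theta> * poly B (cos \<theta>))\<^sup>2 * w (cos \<theta>))
     = I (\<lambda>x. (poly A x)\<^sup>2 + (1 - x\<^sup>2) * (poly B x)\<^sup>2) / I (\<lambda>x. 1)"
    unfolding NORM cw_eq using i1 by simp
  also have "\<dots> \<le> M1\<^sup>2 + M2\<^sup>2" using le i1 by (simp add: divide_le_eq)
  finally show ?thesis by (simp add: A_def B_def M1_def M2_def)
qed

end


lemma circ_decomp:
  fixes c s :: real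
  assumes "s \<noteq> 0" "s\<^sup>2 = 1 - c\<^sup>2"
  shows "f_even f c + s * f_odd f c = f c s"
proof -
  have sq: "sqrt (1 - c\<^sup>2) = \<bar>s\<bar>" using assms(2) by (metis real_sqrt_abs)
  show ?thesis
  proof (cases "s > 0")
    case True
    then show ?thesis using assms(1) unfolding f_even_def f_odd_def sq
      by (simp add: field_simps)
  next
    case False
    then have "s < 0" using assms(1) by simp
    then show ?thesis using assms(1) unfolding f_even_def f_odd_def sq
      by (simp add: field_simps)
  qed
qed

lemma poly_of_rpf:
  fixes g :: "real \<Rightarrow> real"
  assumes "real_polynomial_function g"
  shows "\<exists>p. \<forall>x. g x = poly p x"
  using assms
proof (induction rule: real_polynomial_function.induct)
  case (linear f)
  then obtain c where "f = (\<lambda>x. x * c)" using real_bounded_linear by blast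
  then show ?case by (intro exI[of _ "[:0, c:]"]) simp
next
  case (const c)
  then show ?case by (intro exI[of _ "[:c:]"]) simp
next
  case (add f g)
  then obtain p q where "\<forall>x. f x = poly p x" "\<forall>x. g x = poly q x" by blast
  then show ?case by (intro exI[of _ "p + q"]) simp
next
  case (mult f g)
  then obtain p q where "\<forall>x. f x = poly p x" "\<forall>x. g x = poly q x" by blast
  then show ?case by (intro exI[of _ "p * q"]) simp
qed

definition Sp :: "(real \<Rightarrow> real) \<Rightarrow> real poly \<Rightarrow> real" where
  "Sp g p = (SUP t\<in>{-1..1}. \<bar>g t - poly p t\<bar>)"

lemma Sp_bdd:
  fixes g :: "real \<Rightarrow> real" and p :: "real poly"
  assumes "continuous_on {-1..1} g"
  shows "bdd_above ((\<lambda>t. \<bar>g t - poly p t\<bar>) ` {-1..1})"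
proof -
  have "continuous_on {-1..1} (\<lambda>t. \<bar>g t - poly p t\<bar>)"
    by (intro continuous_intros assms)
  then show ?thesis
    by (rule bounded_imp_bdd_above[OF compact_imp_bounded[OF compact_continuous_image[OF _ compact_Icc]]])
qed

lemma Sp_upper:
  fixes g :: "real \<Rightarrow> real" and p :: "real poly"
  assumes "continuous_on {-1..1} g" "t \<in> {-1..1}"
  shows "\<bar>g t - poly p t\<bar> \<le> Sp g p"
  unfolding Sp_def by (rule cSUP_upper[OF assms(2) Sp_bdd[OF assms(1)]])

lemma Sp_nonneg:
  fixes g :: "real \<Rightarrow> real" and p :: "real poly"
  assumes "continuous_on {-1..1} g"
  shows "0 \<le> Sp g p"
  using Sp_upper[OF assms, of 0 p] by simp

lemma best_Sp: "best_approx m g = (INF p\<in>{p. degree p \<le> m}. Sp g p)"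
  unfolding best_approx_def Sp_def ..

context wctx begin

lemma cw_pos: "0 < c_w w"
  using I1_pos cw_eq by simp

lemma circ_norm_nonneg: "0 \<le> circ_norm w G"
proof -
  have "0 \<le> integral {-pi..pi} (\<lambda>\<theta>. (G (cos \<theta>) (sin \<theta>))\<^sup>2 * w (cos \<theta>))"
  proof (cases "(\<lambda>\<theta>. (G (cos \<theta>) (sin \<theta>))\<^sup>2 * w (cos \<theta>)) integrable_on {-pi..pi}")
    case True
    then show ?thesis by (rule integral_nonneg) (auto intro!: mult_nonneg_nonneg w_nonneg)
  qed (simp add: not_integrable_integral)
  then show ?thesis unfolding circ_norm_def using cw_pos by simp
qed

lemma circ_interp_eq:
  "circ_interp (P n) f x y = poly (lagp (X n) (f_even f)) x + y * poly (lagp (X n) (f_odd f)) x"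
  by (simp add: circ_interp_def L_interp_def lag_poly X_def)

lemma Max_nonneg:
  fixes g :: "real \<Rightarrow> real"
  assumes "n \<ge> 1"
  shows "0 \<le> Max ((\<lambda>x. \<bar>g x\<bar>) ` X n)"
proof -
  have finX: "finite (X n)" and cX: "card (X n) = n" using roots[OF assms] X_def by auto
  then obtain x0 where "x0 \<in> X n" using assms by fastforce
  then have "\<bar>g x0\<bar> \<le> Max ((\<lambda>x. \<bar>g x\<bar>) ` X n)" using finX by (intro Max_ge) auto
  then show ?thesis using abs_ge_zero[of "g x0"] by linarith
qed

lemma PART1:
  assumes n: "n \<ge> 1"
  shows "circ_norm w (circ_interp (P n) f)
          \<le> Max ((\<lambda>x. \<bar>f_even f x\<bar>) ` {x. poly (P n) x = 0})
            + Max ((\<lambda>x. \<bar>f_odd f x\<bar>) ` {x. poly (P n) x = 0})"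
proof -
  define M1 where "M1 = Max ((\<lambda>x. \<bar>f_even f x\<bar>) ` X n)"
  define M2 where "M2 = Max ((\<lambda>x. \<bar>f_odd f x\<bar>) ` X n)"
  have m1: "0 \<le> M1" "0 \<le> M2" unfolding M1_def M2_def by (intro Max_nonneg[OF n])+
  have "circ_norm w (circ_interp (P n) f) = sqrt (c_w w * integral {-pi..pi} (\<lambda>\<theta>. (poly (lagp (X n) (f_even f)) (cos \<theta>) + sin \<theta> * poly (lagp (X n) (f_odd f)) (cos \<theta>))\<^sup>2 * w (cos \<theta>)))"
    unfolding circ_norm_def circ_interp_eq ..
  also have "\<dots> \<le> sqrt (M1\<^sup>2 + M2\<^sup>2)"
    unfolding M1_def M2_def by (rule real_sqrt_le_mono[OF NB[OF n]])
  also have "\<dots> \<le> sqrt ((M1 + M2)\<^sup>2)"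
    using m1 by (intro real_sqrt_le_mono) (simp add: power2_sum)
  also have "\<dots> = M1 + M2" using m1 by simp
  finally show ?thesis by (simp add: M1_def M2_def X_def)
qed

lemma KEY:
  assumes n: "n \<ge> 1" and cge: "continuous_on {-1..1} ge" and cgo: "continuous_on {-1..1} go"
    and agree: "\<forall>x\<in>{-1<..<1}. ge x = f_even f x \<and> go x = f_odd f x"
    and dpe: "degree pe \<le> n - 1" and dpo: "degree po \<le> n - 1"
  shows "circ_norm w (\<lambda>x y. circ_interp (P n) f x y - f x y) \<le> 2 * Sp ge pe + 2 * Sp go po"
proof -
  define Se where "Se = Sp ge pe"
  define So where "So = Sp go po"
  have Se0: "0 \<le> Se" "0 \<le> So" unfolding Se_def So_def using Sp_nonneg cge cgo by auto
  have finX: "finite (X n)" and cX: "card (X n) = n" and Xsub: "X n \<subseteq> {-1<..<1}"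
    using roots[OF n] X_def by auto
  have Xne: "X n \<noteq> {}" using cX n by auto
  define A where "A = lagp (X n) (\<lambda>x. ge x - poly pe x)"
  define B where "B = lagp (X n) (\<lambda>x. go x - poly po x)"
  define M1 where "M1 = Max ((\<lambda>x. \<bar>ge x - poly pe x\<bar>) ` X n)"
  define M2 where "M2 = Max ((\<lambda>x. \<bar>go x - poly po x\<bar>) ` X n)"
  have m0: "0 \<le> M1" "0 \<le> M2" unfolding M1_def M2_def by (intro Max_nonneg[OF n])+
  have "M1 \<le> Se" unfolding M1_def Se_def
    using finX Xne Xsub by (intro Max.boundedI) (auto intro!: Sp_upper[OF cge])
  moreover have "M2 \<le> So" unfolding M2_def So_def
    using finX Xne Xsub by (intro Max.boundedI) (auto intro!: Sp_upper[OF cgo])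
  ultimately have MS: "M1\<^sup>2 + M2\<^sup>2 \<le> Se\<^sup>2 + So\<^sup>2" using m0
    by (intro add_mono power_mono) auto
  define U where "U = (\<lambda>\<theta>. poly A (cos \<theta>) + sin \<theta> * poly B (cos \<theta>))"
  define V where "V = (\<lambda>\<theta>. (ge (cos \<theta>) - poly pe (cos \<theta>)) + sin \<theta> * (go (cos \<theta>) - poly po (cos \<theta>)))"
  have cosim: "cos ` {-pi..pi} \<subseteq> {-1..1}" by auto
  have cU: "continuous_on {-pi..pi} U" unfolding U_def by (intro continuous_intros)
  have cge': "continuous_on {-pi..pi} (\<lambda>\<theta>. ge (cos \<theta>))"
    by (rule continuous_on_compose2[OF cge _ cosim]) (intro continuous_intros)
  have cgo': "continuous_on {-pi..pi} (\<lambda>\<theta>. go (cos \<theta>))"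
    by (rule continuous_on_compose2[OF cgo _ cosim]) (intro continuous_intros)
  have cV: "continuous_on {-pi..pi} V" unfolding V_def
    by (intro continuous_intros cge' cgo' continuous_on_id')
  have lagE: "lagp (X n) (f_even f) = A + pe"
  proof -
    have "lagp (X n) (f_even f) = lagp (X n) ge"
      by (rule lagp_cong) (use agree Xsub in auto)
    also have "lagp (X n) ge = lagp (X n) (\<lambda>x. ge x - poly pe x) + lagp (X n) (poly pe)"
      by (simp add: lagp_diff)
    also have "lagp (X n) (poly pe) = pe" by (rule lagp_exact[OF finX]) (use dpe cX n in linarith)
    finally show ?thesis by (simp add: A_def)
  qed
  have lagO: "lagp (X n) (f_odd f) = B + po"
  proof -
    have "lagp (X n) (f_odd f) = lagp (X n) go"
      by (rule lagp_cong) (use agree Xsub in auto)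
    also have "lagp (X n) go = lagp (X n) (\<lambda>x. go x - poly po x) + lagp (X n) (poly po)"
      by (simp add: lagp_diff)
    also have "lagp (X n) (poly po) = po" by (rule lagp_exact[OF finX]) (use dpo cX n in linarith)
    finally show ?thesis by (simp add: B_def)
  qed
  have Deq: "circ_interp (P n) f (cos \<theta>) (sin \<theta>) - f (cos \<theta>) (sin \<theta>) = U \<theta> - V \<theta>"
    if th: "\<theta> \<in> {-pi..pi} - {-pi, 0, pi}" for \<theta>
  proof -
    have s0: "sin \<theta> \<noteq> 0" using th sin_eq_0_pi[of \<theta>] by auto
    have "(cos \<theta>)\<^sup>2 < 1" using s0 sin_cos_squared_add[of \<theta>]
      by (smt (verit) zero_less_power2)
    then have "\<bar>cos \<theta>\<bar> < 1" by (simp add: abs_square_less_1)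
    then have c1: "cos \<theta> \<in> {-1<..<1}" by auto
    have "f (cos \<theta>) (sin \<theta>) = ge (cos \<theta>) + sin \<theta> * go (cos \<theta>)"
      using circ_decomp[OF s0, of "cos \<theta>" f] agree c1 by (simp add: sin_squared_eq)
    then show ?thesis unfolding circ_interp_eq lagE lagO U_def V_def
      by (simp add: algebra_simps)
  qed
  have int_eq: "integral {-pi..pi} (\<lambda>\<theta>. ((\<lambda>x y. circ_interp (P n) f x y - f x y) (cos \<theta>) (sin \<theta>))\<^sup>2 * w (cos \<theta>))
      = integral {-pi..pi} (\<lambda>\<theta>. (U \<theta> - V \<theta>)\<^sup>2 * w (cos \<theta>))"
    by (rule integral_spike[of "{-pi, 0, pi}"]) (auto simp: Deq)
  have wc0: "0 \<le> w (cos \<theta>)" for \<theta> by (intro w_nonneg) auto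
  have "integral {-pi..pi} (\<lambda>\<theta>. (U \<theta> - V \<theta>)\<^sup>2 * w (cos \<theta>))
      \<le> integral {-pi..pi} (\<lambda>\<theta>. (2 * (U \<theta>)\<^sup>2 + 2 * (V \<theta>)\<^sup>2) * w (cos \<theta>))"
  proof (rule integral_le)
    show "(\<lambda>\<theta>. (U \<theta> - V \<theta>)\<^sup>2 * w (cos \<theta>)) integrable_on {-pi..pi}"
      by (rule CI) (intro continuous_intros cU cV)
    show "(\<lambda>\<theta>. (2 * (U \<theta>)\<^sup>2 + 2 * (V \<theta>)\<^sup>2) * w (cos \<theta>)) integrable_on {-pi..pi}"
      by (rule CI) (intro continuous_intros cU cV)
    fix \<theta> :: real
    have "(U \<theta> - V \<theta>)\<^sup>2 \<le> 2 * (U \<theta>)\<^sup>2 + 2 * (V \<theta>)\<^sup>2"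
      by (smt (verit) zero_le_power2 power2_diff power2_sum)
    then show "(U \<theta> - V \<theta>)\<^sup>2 * w (cos \<theta>) \<le> (2 * (U \<theta>)\<^sup>2 + 2 * (V \<theta>)\<^sup>2) * w (cos \<theta>)"
      using wc0 by (rule mult_right_mono)
  qed
  also have "\<dots> = 2 * integral {-pi..pi} (\<lambda>\<theta>. (U \<theta>)\<^sup>2 * w (cos \<theta>)) + 2 * integral {-pi..pi} (\<lambda>\<theta>. (V \<theta>)\<^sup>2 * w (cos \<theta>))"
  proof -
    have "integral {-pi..pi} (\<lambda>\<theta>. (2 * (U \<theta>)\<^sup>2 + 2 * (V \<theta>)\<^sup>2) * w (cos \<theta>))
       = integral {-pi..pi} (\<lambda>\<theta>. 2 * ((U \<theta>)\<^sup>2 * w (cos \<theta>)) + 2 * ((V \<theta>)\<^sup>2 * w (cos \<theta>)))"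
      by (simp add: algebra_simps)
    also have "\<dots> = integral {-pi..pi} (\<lambda>\<theta>. 2 * ((U \<theta>)\<^sup>2 * w (cos \<theta>))) + integral {-pi..pi} (\<lambda>\<theta>. 2 * ((V \<theta>)\<^sup>2 * w (cos \<theta>)))"
      by (rule integral_add; rule integrable_on_mult_right; rule CI) (intro continuous_intros cU cV)+
    finally show ?thesis by simp
  qed
  finally have i1: "integral {-pi..pi} (\<lambda>\<theta>. (U \<theta> - V \<theta>)\<^sup>2 * w (cos \<theta>))
      \<le> 2 * integral {-pi..pi} (\<lambda>\<theta>. (U \<theta>)\<^sup>2 * w (cos \<theta>)) + 2 * integral {-pi..pi} (\<lambda>\<theta>. (V \<theta>)\<^sup>2 * w (cos \<theta>))" .
  have iU: "c_w w * integral {-pi..pi} (\<lambda>\<theta>. (U \<theta>)\<^sup>2 * w (cos \<theta>)) \<le> Se\<^sup>2 + So\<^sup>2"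
    using NB[OF n, of "\<lambda>x. ge x - poly pe x" "\<lambda>x. go x - poly po x"] MS
    unfolding U_def A_def B_def M1_def M2_def by linarith
  have wint: "integral {-pi..pi} (\<lambda>\<theta>. w (cos \<theta>)) = 2 * I (\<lambda>x. 1)"
    using integral_unique[OF SUB[of "\<lambda>x. 1"]] by simp
  have cw1: "c_w w * integral {-pi..pi} (\<lambda>\<theta>. w (cos \<theta>)) = 1"
    unfolding wint cw_eq using I1_pos by simp
  have "integral {-pi..pi} (\<lambda>\<theta>. (V \<theta>)\<^sup>2 * w (cos \<theta>)) \<le> integral {-pi..pi} (\<lambda>\<theta>. (Se + So)\<^sup>2 * w (cos \<theta>))"
  proof (rule integral_le)
    show "(\<lambda>\<theta>. (V \<theta>)\<^sup>2 * w (cos \<theta>)) integrable_on {-pi..pi}"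
      by (rule CI) (intro continuous_intros cV)
    show "(\<lambda>\<theta>. (Se + So)\<^sup>2 * w (cos \<theta>)) integrable_on {-pi..pi}"
      by (rule CI) (intro continuous_intros)
    fix \<theta> :: real assume "\<theta> \<in> {-pi..pi}"
    have c: "cos \<theta> \<in> {-1..1}" by auto
    have a1: "\<bar>ge (cos \<theta>) - poly pe (cos \<theta>)\<bar> \<le> Se" unfolding Se_def by (rule Sp_upper[OF cge c])
    have a2: "\<bar>go (cos \<theta>) - poly po (cos \<theta>)\<bar> \<le> So" unfolding So_def by (rule Sp_upper[OF cgo c])
    have "\<bar>sin \<theta> * (go (cos \<theta>) - poly po (cos \<theta>))\<bar> \<le> 1 * So"
      unfolding abs_mult by (rule mult_mono) (use a2 Se0 in auto)
    then have "\<bar>V \<theta>\<bar> \<le> Se + So" unfolding V_def using a1 by linarith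
    then have "(V \<theta>)\<^sup>2 \<le> (Se + So)\<^sup>2"
      by (metis abs_ge_zero abs_le_square_iff abs_of_nonneg order_trans power2_abs)
    then show "(V \<theta>)\<^sup>2 * w (cos \<theta>) \<le> (Se + So)\<^sup>2 * w (cos \<theta>)"
      using wc0 by (rule mult_right_mono)
  qed
  also have "\<dots> = (Se + So)\<^sup>2 * integral {-pi..pi} (\<lambda>\<theta>. w (cos \<theta>))" by simp
  finally have iV0: "integral {-pi..pi} (\<lambda>\<theta>. (V \<theta>)\<^sup>2 * w (cos \<theta>)) \<le> (Se + So)\<^sup>2 * integral {-pi..pi} (\<lambda>\<theta>. w (cos \<theta>))" .
  have "c_w w * integral {-pi..pi} (\<lambda>\<theta>. (V \<theta>)\<^sup>2 * w (cos \<theta>)) \<le> c_w w * ((Se + So)\<^sup>2 * integral {-pi..pi} (\<lambda>\<theta>. w (cos \<theta>)))"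
    using cw_pos iV0 by (intro mult_left_mono) auto
  also have "\<dots> = (Se + So)\<^sup>2 * (c_w w * integral {-pi..pi} (\<lambda>\<theta>. w (cos \<theta>)))" by (simp only: mult.left_commute)
  also have "\<dots> = (Se + So)\<^sup>2" unfolding cw1 by simp
  finally have iV: "c_w w * integral {-pi..pi} (\<lambda>\<theta>. (V \<theta>)\<^sup>2 * w (cos \<theta>)) \<le> (Se + So)\<^sup>2" .
  have "c_w w * integral {-pi..pi} (\<lambda>\<theta>. (U \<theta> - V \<theta>)\<^sup>2 * w (cos \<theta>))
      \<le> c_w w * (2 * integral {-pi..pi} (\<lambda>\<theta>. (U \<theta>)\<^sup>2 * w (cos \<theta>)) + 2 * integral {-pi..pi} (\<lambda>\<theta>. (V \<theta>)\<^sup>2 * w (cos \<theta>)))"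
    using i1 cw_pos by (intro mult_left_mono) auto
  also have "\<dots> = 2 * (c_w w * integral {-pi..pi} (\<lambda>\<theta>. (U \<theta>)\<^sup>2 * w (cos \<theta>))) + 2 * (c_w w * integral {-pi..pi} (\<lambda>\<theta>. (V \<theta>)\<^sup>2 * w (cos \<theta>)))"
    by (simp add: algebra_simps)
  also have "\<dots> \<le> 2 * (Se\<^sup>2 + So\<^sup>2) + 2 * (Se + So)\<^sup>2" using iU iV by (intro add_mono mult_left_mono) auto
  also have "\<dots> \<le> (2 * Se + 2 * So)\<^sup>2"
  proof -
    have "(2 * Se + 2 * So)\<^sup>2 - (2 * (Se\<^sup>2 + So\<^sup>2) + 2 * (Se + So)\<^sup>2) = 4 * (Se * So)"
      by (simp add: power2_eq_square algebra_simps)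
    moreover have "0 \<le> Se * So" using Se0 by simp
    ultimately show ?thesis by linarith
  qed
  finally have fin: "c_w w * integral {-pi..pi} (\<lambda>\<theta>. (U \<theta> - V \<theta>)\<^sup>2 * w (cos \<theta>)) \<le> (2 * Se + 2 * So)\<^sup>2" .
  have "circ_norm w (\<lambda>x y. circ_interp (P n) f x y - f x y) = sqrt (c_w w * integral {-pi..pi} (\<lambda>\<theta>. (U \<theta> - V \<theta>)\<^sup>2 * w (cos \<theta>)))"
    unfolding circ_norm_def int_eq ..
  also have "\<dots> \<le> sqrt ((2 * Se + 2 * So)\<^sup>2)" by (rule real_sqrt_le_mono[OF fin])
  also have "\<dots> = 2 * Se + 2 * So" using Se0 by simp
  finally show ?thesis by (simp add: Se_def So_def)
qed

end


theorem theorem8p2: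
  fixes w :: "real \<Rightarrow> real" and P :: "nat \<Rightarrow> real poly"
  assumes w_nonneg: "\<And>t. t \<in> {-1..1} \<Longrightarrow> w t \<ge> 0"
    and w_even: "\<And>t. w (- t) = w t"
    and w_int: "wmh w integrable_on {-1..1}"
    and w_pos: "integral {-1..1} w > 0"
    and P_orth: "\<And>n. orth_poly (wmh w) n (P n)"
  shows "(\<forall>n\<ge>1. \<forall>f :: real \<Rightarrow> real \<Rightarrow> real.
            circ_norm w (circ_interp (P n) f)
              \<le> Max ((\<lambda>x. \<bar>f_even f x\<bar>) ` {x. poly (P n) x = 0})
                + Max ((\<lambda>x. \<bar>f_odd f x\<bar>) ` {x. poly (P n) x = 0}))
       \<and> (\<forall>(f :: real \<Rightarrow> real \<Rightarrow> real) ge go.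
            continuous_on {-1..1} ge \<and> continuous_on {-1..1} go \<and>
            (\<forall>x\<in>{-1<..<1}. ge x = f_even f x \<and> go x = f_odd f x) \<longrightarrow>
            (\<forall>n\<ge>1. circ_norm w (\<lambda>x y. circ_interp (P n) f x y - f x y)
                       \<le> 2 * best_approx (n - 1) ge + 2 * best_approx (n - 1) go)
            \<and> (\<lambda>n. circ_norm w (\<lambda>x y. circ_interp (P n) f x y - f x y)) \<longlonglongrightarrow> 0)"
proof -
  interpret wctx w P
    by unfold_locales (use w_nonneg w_even w_int w_pos P_orth in auto)
  have part1: "\<forall>n\<ge>1. \<forall>f :: real \<Rightarrow> real \<Rightarrow> real.
            circ_norm w (circ_interp (P n) f)
              \<le> Max ((\<lambda>x. \<bar>f_even f x\<bar>) ` {x. poly (P n) x = 0})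
                + Max ((\<lambda>x. \<bar>f_odd f x\<bar>) ` {x. poly (P n) x = 0})"
    using PART1 by blast
  have part2: "(\<forall>n\<ge>1. circ_norm w (\<lambda>x y. circ_interp (P n) f x y - f x y)
                       \<le> 2 * best_approx (n - 1) ge + 2 * best_approx (n - 1) go)
            \<and> (\<lambda>n. circ_norm w (\<lambda>x y. circ_interp (P n) f x y - f x y)) \<longlonglongrightarrow> 0"
    if cge: "continuous_on {-1..1} ge" and cgo: "continuous_on {-1..1} go"
      and agree: "\<forall>x\<in>{-1<..<1}. ge x = f_even f x \<and> go x = f_odd f x"
    for f :: "real \<Rightarrow> real \<Rightarrow> real" and ge go
  proof -
    define N where "N n = circ_norm w (\<lambda>x y. circ_interp (P n) f x y - f x y)" for n
    have bdd_e: "bdd_below ((\<lambda>p. Sp ge p) ` Q)" for Q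
      using Sp_nonneg[OF cge] by (intro bdd_belowI[of _ 0]) auto
    have bdd_o: "bdd_below ((\<lambda>p. Sp go p) ` Q)" for Q
      using Sp_nonneg[OF cgo] by (intro bdd_belowI[of _ 0]) auto
    have bound: "N n \<le> 2 * best_approx (n - 1) ge + 2 * best_approx (n - 1) go" if n: "n \<ge> 1" for n
    proof (rule field_le_epsilon)
      fix e :: real assume e: "0 < e"
      define Q where "Q = {p :: real poly. degree p \<le> n - 1}"
      have Qne: "Q \<noteq> {}" unfolding Q_def by (intro ex_in_conv[THEN iffD1] exI[of _ 0]) auto
      have "(INF p\<in>Q. Sp ge p) < best_approx (n - 1) ge + e / 4"
        using e by (simp add: best_Sp Q_def)
      then obtain pe where pe: "pe \<in> Q" "Sp ge pe < best_approx (n - 1) ge + e / 4"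
        using cINF_less_iff[OF Qne bdd_e] by blast
      have "(INF p\<in>Q. Sp go p) < best_approx (n - 1) go + e / 4"
        using e by (simp add: best_Sp Q_def)
      then obtain po where po: "po \<in> Q" "Sp go po < best_approx (n - 1) go + e / 4"
        using cINF_less_iff[OF Qne bdd_o] by blast
      have "N n \<le> 2 * Sp ge pe + 2 * Sp go po"
        unfolding N_def by (rule KEY[OF n cge cgo agree]) (use pe po Q_def in auto)
      then show "N n \<le> 2 * best_approx (n - 1) ge + 2 * best_approx (n - 1) go + e"
        using pe po by linarith
    qed
    have conv: "N \<longlonglongrightarrow> 0"
    proof (rule LIMSEQ_I)
      fix r :: real assume r: "0 < r"
      obtain g1 where g1: "real_polynomial_function g1" "\<And>x. x \<in> {-1..1} \<Longrightarrow> \<bar>ge x - g1 x\<bar> < r / 8"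
        using Stone_Weierstrass_real_polynomial_function[OF compact_Icc cge, of "r/8"] r by auto
      obtain g2 where g2: "real_polynomial_function g2" "\<And>x. x \<in> {-1..1} \<Longrightarrow> \<bar>go x - g2 x\<bar> < r / 8"
        using Stone_Weierstrass_real_polynomial_function[OF compact_Icc cgo, of "r/8"] r by auto
      obtain qe where qe: "\<forall>x. g1 x = poly qe x" using poly_of_rpf[OF g1(1)] by blast
      obtain qo where qo: "\<forall>x. g2 x = poly qo x" using poly_of_rpf[OF g2(1)] by blast
      have Se: "Sp ge qe \<le> r / 8" unfolding Sp_def
        by (rule cSUP_least) (use g2 qe g1 in \<open>auto intro: less_imp_le\<close>)
      have So: "Sp go qo \<le> r / 8" unfolding Sp_def
        by (rule cSUP_least) (use qo g2 in \<open>auto intro: less_imp_le\<close>)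
      show "\<exists>no. \<forall>n\<ge>no. norm (N n - 0) < r"
      proof (intro exI allI impI)
        fix n assume n: "Suc (max (degree qe) (degree qo)) \<le> n"
        then have n1: "n \<ge> 1" by simp
        have "best_approx (n - 1) ge \<le> Sp ge qe" unfolding best_Sp
          by (rule cINF_lower[OF bdd_e]) (use n in auto)
        moreover have "best_approx (n - 1) go \<le> Sp go qo" unfolding best_Sp
          by (rule cINF_lower[OF bdd_o]) (use n in auto)
        ultimately have "N n \<le> r / 2" using bound[OF n1] Se So by linarith
        moreover have "0 \<le> N n" unfolding N_def by (rule circ_norm_nonneg)
        ultimately show "norm (N n - 0) < r" using r by simp
      qed
    qed
    show ?thesis using bound conv unfolding N_def by blast
  qed
  show ?thesis using part1 part2 by blast
qed

end
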